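(* Let $\alpha>0$ be irrational. (i) If $\alpha$ is badly approximable, then there is $C>0$ with $\delta_{\min}^{(\alpha)}(N)\ge C/N$ for all $N\ge2$. (ii) If $\alpha$ is strongly Diophantine, then for every $\varepsilon>0$ there is $C>0$ with $\delta_{\min}^{(\alpha)}(N)\ge C/N^{1+\varepsilon}$ for all $N\ge 2$. (iii) For Lebesgue-almost every $\alpha>0$: for every $\varepsilon>0$ there is $C>0$ with $\delta_{\min}^{(\alpha)}(N)\ge \frac{C}{N(\log N)^{1+\varepsilon}}$ for all $N\ge2$.
   Context: For irrational $\alpha>0$, the numbers $\alpha m^2+n^2$ with integers $m,n\ge 1$ are pairwise distinct; list them in increasing order as $0<\lambda_1<\lambda_2<\cdots$. For $N\ge 2$ define $\delta_{\min}^{(\alpha)}(N)=\min\{\lambda_{i+1}-\lambda_i : 1\le i<N\}$. An irrational $\alpha$ is badly approximable if there is $c>0$ such that $|q\alpha-p|\ge c/q$ for all integers $p,q$ with $q\ge1$. It is strongly Diophantine if for every $\varepsilon>0$ there is $c_\varepsilon>0$ such that $|q\alpha-p|\ge c_\varepsilon q^{-1-\varepsilon}$ for all integers $p,q$ with $q\ge1$. Constants $C$ may depend on $\alpha$ and $\varepsilon$. *)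

theory Defs
  imports "HOL-Analysis.Analysis"
begin

definition spec_set :: "real \<Rightarrow> real set" where
  "spec_set \<alpha> = {\<alpha> * (real m)^2 + (real n)^2 | m n :: nat. m \<ge> 1 \<and> n \<ge> 1}"

definition lam :: "real \<Rightarrow> nat \<Rightarrow> real" where
  "lam \<alpha> i = (THE x. x \<in> spec_set \<alpha> \<and> card {y \<in> spec_set \<alpha>. y < x} = i - 1)"

definition delta_min :: "real \<Rightarrow> nat \<Rightarrow> real" where
  "delta_min \<alpha> N = Min {lam \<alpha> (i + 1) - lam \<alpha> i | i. 1 \<le> i \<and> i < N}"

definition badly_approximable :: "real \<Rightarrow> bool" where
  "badly_approximable \<alpha> \<longleftrightarrow> \<alpha> \<notin> \<rat> \<and>
     (\<exists>c>0. \<forall>p q :: int. q \<ge> 1 \<longrightarrow> \<bar>real_of_int q * \<alpha> - real_of_int p\<bar> \<ge> c / real_of_int q)"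

definition strongly_diophantine :: "real \<Rightarrow> bool" where
  "strongly_diophantine \<alpha> \<longleftrightarrow> \<alpha> \<notin> \<rat> \<and>
     (\<forall>\<epsilon>>0. \<exists>c>0. \<forall>p q :: int. q \<ge> 1 \<longrightarrow>
        \<bar>real_of_int q * \<alpha> - real_of_int p\<bar> \<ge> c * (real_of_int q) powr (-1 - \<epsilon>))"

end

theory Submission
  imports Defs
begin


lemma enum_exists:
  fixes S :: "real set"
  assumes fin: "\<And>X. finite {y\<in>S. y \<le> X}"
    and unb: "\<And>X. \<exists>y\<in>S. X < y" and ne: "S \<noteq> {}"
  shows "\<exists>x. x \<in> S \<and> card {y\<in>S. y < x} = k"
proof (induction k)
  case 0
  obtain x0 where x0: "x0 \<in> S" using ne by blast
  define T where "T = {y\<in>S. y \<le> x0}"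
  have fT: "finite T" and x0T: "x0 \<in> T" using fin x0 by (auto simp: T_def)
  define m where "m = Min T"
  have mT: "m \<in> T" using fT x0T Min_in m_def by blast
  have "{y\<in>S. y < m} = {}"
  proof (rule ccontr)
    assume "{y\<in>S. y < m} \<noteq> {}"
    then obtain y where y: "y \<in> S" "y < m" by blast
    hence "y \<in> T" using mT by (auto simp: T_def)
    hence "m \<le> y" using fT m_def by simp
    thus False using y by simp
  qed
  moreover have "m \<in> S" using mT by (auto simp: T_def)
  ultimately show ?case by (intro exI[of _ m]) (simp only: card.empty)
next
  case (Suc k)
  then obtain x where x: "x \<in> S" "card {y\<in>S. y < x} = k" by blast
  obtain z where z: "z \<in> S" "x < z" using unb by blast
  define T where "T = {y\<in>S. x < y \<and> y \<le> z}"
  have fT: "finite T" using fin[of z] by (rule rev_finite_subset) (auto simp: T_def)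
  have zT: "z \<in> T" using z by (auto simp: T_def)
  define m where "m = Min T"
  have mT: "m \<in> T" using fT zT Min_in m_def by blast
  have eq: "{y\<in>S. y < m} = insert x {y\<in>S. y < x}"
  proof
    show "{y\<in>S. y < m} \<subseteq> insert x {y\<in>S. y < x}"
    proof
      fix y assume y: "y \<in> {y\<in>S. y < m}"
      show "y \<in> insert x {y\<in>S. y < x}"
      proof (rule ccontr)
        assume "y \<notin> insert x {y\<in>S. y < x}"
        hence "x < y" using y by auto
        hence "y \<in> T" using y mT by (auto simp: T_def)
        hence "m \<le> y" using fT m_def by simp
        thus False using y by simp
      qed
    qed
    show "insert x {y\<in>S. y < x} \<subseteq> {y\<in>S. y < m}" using mT x by (auto simp: T_def)
  qed
  have "finite {y\<in>S. y < x}" using fin[of x] by (rule rev_finite_subset) auto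
  hence "card {y\<in>S. y < m} = Suc k" using eq x by simp
  thus ?case using mT by (auto simp: T_def)
qed

lemma enum_card_strict:
  fixes S :: "real set"
  assumes fin: "\<And>X. finite {y\<in>S. y \<le> X}" and "x \<in> S" "x < x'"
  shows "card {y\<in>S. y < x} < card {y\<in>S. y < x'}"
proof (rule psubset_card_mono)
  show "finite {y\<in>S. y < x'}" using fin[of x'] by (rule rev_finite_subset) auto
  show "{y\<in>S. y < x} \<subset> {y\<in>S. y < x'}" using assms by auto
qed

lemma enum_unique:
  fixes S :: "real set"
  assumes fin: "\<And>X. finite {y\<in>S. y \<le> X}"
    and unb: "\<And>X. \<exists>y\<in>S. X < y" and ne: "S \<noteq> {}"
  shows "\<exists>!x. x \<in> S \<and> card {y\<in>S. y < x} = k"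
proof -
  obtain x where "x \<in> S \<and> card {y\<in>S. y < x} = k" using enum_exists[OF assms] by blast
  moreover have "x' = x" if "x' \<in> S \<and> card {y\<in>S. y < x'} = k" "x \<in> S \<and> card {y\<in>S. y < x} = k" for x x'
  proof (rule ccontr)
    assume "x' \<noteq> x"
    then consider "x' < x" | "x < x'" by linarith
    thus False using enum_card_strict[OF fin] that by (cases, fastforce+)
  qed
  ultimately show ?thesis by blast
qed

lemma spec_fin:
  assumes "\<alpha> > 0" shows "finite {y\<in>spec_set \<alpha>. y \<le> X}"
proof -
  define K where "K = nat \<lceil>X/\<alpha> + X\<rceil>"
  have "{y\<in>spec_set \<alpha>. y \<le> X} \<subseteq> (\<lambda>(m,n). \<alpha>*(real m)^2 + (real n)^2) ` ({..K}\<times>{..K})"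
  proof
    fix y assume "y \<in> {y\<in>spec_set \<alpha>. y \<le> X}"
    then obtain m n :: nat where y: "y = \<alpha>*(real m)^2 + (real n)^2" "m\<ge>1" "n\<ge>1" "y \<le> X"
      by (auto simp: spec_set_def)
    have m1: "real m \<le> (real m)^2" using y(2) by (simp add: power2_eq_square)
    have n1: "real n \<le> (real n)^2" using y(3) by (simp add: power2_eq_square)
    have a: "\<alpha>*(real m)^2 \<le> X" using y by (smt (verit) zero_le_power2)
    hence "(real m)^2 \<le> X/\<alpha>" using assms by (simp add: field_simps)
    have b: "(real n)^2 \<le> X" using y assms by (smt (verit) zero_le_power2 mult_nonneg_nonneg)
    have X0: "X \<ge> 0" using y assms by (smt (verit) zero_le_power2 mult_nonneg_nonneg)
    have "0 \<le> X/\<alpha>" using X0 assms by simp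
    have "real m \<le> real K" using m1 \<open>(real m)^2 \<le> X/\<alpha>\<close> real_nat_ceiling_ge[of "X/\<alpha> + X"] X0
      unfolding K_def by linarith
    moreover have "real n \<le> real K" using n1 b real_nat_ceiling_ge[of "X/\<alpha> + X"] \<open>0 \<le> X/\<alpha>\<close>
      unfolding K_def by linarith
    ultimately show "y \<in> (\<lambda>(m,n). \<alpha>*(real m)^2 + (real n)^2) ` ({..K}\<times>{..K})"
      using y(1) by force
  qed
  thus ?thesis by (rule finite_subset) auto
qed

lemma spec_unb:
  assumes "\<alpha> > 0" shows "\<exists>y\<in>spec_set \<alpha>. X < y"
proof -
  define n where "n = nat \<lceil>X\<rceil> + 1"
  have "\<alpha>*(real 1)^2 + (real n)^2 \<in> spec_set \<alpha>" unfolding spec_set_def n_def by force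
  moreover have "X < \<alpha>*(real 1)^2 + (real n)^2"
  proof -
    have "real n \<le> (real n)^2" using n_def by (simp add: power2_eq_square)
    moreover have "X < real n" using real_nat_ceiling_ge[of X] n_def by simp
    moreover have "\<alpha>*(real 1)^2 + (real n)^2 = \<alpha> + (real n)^2" by simp
    ultimately show ?thesis using assms by linarith
  qed
  ultimately show ?thesis by blast
qed

lemma spec_ne: "spec_set \<alpha> \<noteq> {}"
  unfolding spec_set_def by force

lemma lam_props:
  assumes "\<alpha> > 0"
  shows "lam \<alpha> i \<in> spec_set \<alpha> \<and> card {y\<in>spec_set \<alpha>. y < lam \<alpha> i} = i - 1"
  unfolding lam_def
  by (rule theI') (rule enum_unique[OF spec_fin[OF assms] spec_unb[OF assms] spec_ne])

lemma lam_mono: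
  assumes "\<alpha> > 0" "i \<ge> 1"
  shows "lam \<alpha> i < lam \<alpha> (Suc i)"
proof (rule ccontr)
  assume "\<not> ?thesis"
  hence "lam \<alpha> (Suc i) \<le> lam \<alpha> i" by simp
  hence "{y\<in>spec_set \<alpha>. y < lam \<alpha> (Suc i)} \<subseteq> {y\<in>spec_set \<alpha>. y < lam \<alpha> i}" by auto
  moreover have "finite {y\<in>spec_set \<alpha>. y < lam \<alpha> i}"
    using spec_fin[OF assms(1), of "lam \<alpha> i"] by (rule rev_finite_subset) auto
  ultimately have "card {y\<in>spec_set \<alpha>. y < lam \<alpha> (Suc i)} \<le> card {y\<in>spec_set \<alpha>. y < lam \<alpha> i}"
    by (rule card_mono[rotated])
  thus False using lam_props[OF assms(1), of i] lam_props[OF assms(1), of "Suc i"] assms(2) by simp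
qed

lemma lam_le:
  assumes "\<alpha> > 0" "i \<ge> 1" "card {y\<in>spec_set \<alpha>. y \<le> X} \<ge> i"
  shows "lam \<alpha> i \<le> X"
proof (rule ccontr)
  assume "\<not> ?thesis"
  hence "{y\<in>spec_set \<alpha>. y \<le> X} \<subseteq> {y\<in>spec_set \<alpha>. y < lam \<alpha> i}" by auto
  moreover have "finite {y\<in>spec_set \<alpha>. y < lam \<alpha> i}"
    using spec_fin[OF assms(1), of "lam \<alpha> i"] by (rule rev_finite_subset) auto
  ultimately have "card {y\<in>spec_set \<alpha>. y \<le> X} \<le> card {y\<in>spec_set \<alpha>. y < lam \<alpha> i}"
    by (rule card_mono[rotated])
  thus False using lam_props[OF assms(1), of i] assms by simp
qed

lemma lam_le_lam:
  assumes "\<alpha> > 0" "1 \<le> i" "i \<le> N"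
  shows "lam \<alpha> i \<le> lam \<alpha> N"
proof (rule lam_le[OF assms(1,2)])
  have "insert (lam \<alpha> N) {y\<in>spec_set \<alpha>. y < lam \<alpha> N} \<subseteq> {y\<in>spec_set \<alpha>. y \<le> lam \<alpha> N}"
    using lam_props[OF assms(1), of N] by auto
  moreover have "finite {y\<in>spec_set \<alpha>. y \<le> lam \<alpha> N}" by (rule spec_fin[OF assms(1)])
  ultimately have "card (insert (lam \<alpha> N) {y\<in>spec_set \<alpha>. y < lam \<alpha> N}) \<le> card {y\<in>spec_set \<alpha>. y \<le> lam \<alpha> N}"
    by (rule card_mono[rotated])
  moreover have "finite {y\<in>spec_set \<alpha>. y < lam \<alpha> N}"
    using spec_fin[OF assms(1), of "lam \<alpha> N"] by (rule rev_finite_subset) auto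
  ultimately show "i \<le> card {y\<in>spec_set \<alpha>. y \<le> lam \<alpha> N}"
    using lam_props[OF assms(1), of N] assms by simp
qed



lemma spec_inj:
  assumes "\<alpha> \<notin> \<rat>" "\<alpha>*(real m)^2 + (real n)^2 = \<alpha>*(real m')^2 + (real n')^2"
  shows "m = m' \<and> n = n'"
proof -
  have mm: "(real m)^2 = (real m')^2"
  proof (rule ccontr)
    assume ne: "(real m)^2 \<noteq> (real m')^2"
    have "\<alpha> * ((real m)^2 - (real m')^2) = (real n')^2 - (real n)^2" using assms(2) by (simp add: algebra_simps)
    hence "\<alpha> = ((real n')^2 - (real n)^2) / ((real m)^2 - (real m')^2)" using ne by (simp add: field_simps)
    also have "\<dots> \<in> \<rat>" by (intro Rats_divide Rats_diff) (simp_all add: Rats_of_nat)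
    finally show False using assms(1) by simp
  qed
  hence "m = m'" by simp
  moreover have "(real n)^2 = (real n')^2" using mm assms(2) by simp
  hence "n = n'" by simp
  ultimately show ?thesis by simp
qed

lemma spec_count:
  assumes "\<alpha> > 0" "\<alpha> \<notin> \<rat>" "N \<ge> 1"
  shows "card {y\<in>spec_set \<alpha>. y \<le> 4*(\<alpha>+1)*real N} \<ge> N"
proof -
  define s where "s = nat \<lceil>sqrt (real N)\<rceil>"
  have sq1: "sqrt (real N) \<ge> 1" using assms(3) by simp
  have s1: "sqrt (real N) \<le> real s" unfolding s_def by (rule real_nat_ceiling_ge)
  have s2: "real s < sqrt (real N) + 1" unfolding s_def using sq1 by linarith
  have sN: "real N \<le> (real s)^2"
    using power_mono[OF s1, of 2] by simp
  have sN2: "(real s)^2 \<le> 4 * real N"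
  proof -
    have "real s \<le> 2 * sqrt (real N)" using s2 sq1 by linarith
    from power_mono[OF this, of 2] show ?thesis by (simp add: power_mult_distrib)
  qed
  define g where "g = (\<lambda>(m,n). \<alpha>*(real m)^2 + (real n)^2)"
  have inj: "inj_on g ({1..s}\<times>{1..s})"
    unfolding inj_on_def g_def using spec_inj[OF assms(2)] by auto
  have sub: "g ` ({1..s}\<times>{1..s}) \<subseteq> {y\<in>spec_set \<alpha>. y \<le> 4*(\<alpha>+1)*real N}"
  proof
    fix y assume "y \<in> g ` ({1..s}\<times>{1..s})"
    then obtain m n where mn: "m \<in> {1..s}" "n \<in> {1..s}" "y = \<alpha>*(real m)^2 + (real n)^2"
      unfolding g_def by auto
    have "y \<in> spec_set \<alpha>" using mn unfolding spec_set_def by auto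
    moreover have "(real m)^2 \<le> (real s)^2" "(real n)^2 \<le> (real s)^2"
      using mn by (auto intro!: power_mono)
    moreover have "\<alpha>*(real m)^2 \<le> \<alpha>*(real s)^2"
      using calculation(2) assms(1) by (intro mult_left_mono) auto
    moreover have "\<alpha>*(real s)^2 \<le> \<alpha>*(4*real N)"
      using sN2 assms(1) by (intro mult_left_mono) auto
    moreover have "4*(\<alpha>+1)*real N = \<alpha>*(4*real N) + 4*real N" by (simp add: algebra_simps)
    ultimately have "y \<le> 4*(\<alpha>+1)*real N" using mn(3) sN2 by linarith
    thus "y \<in> {y\<in>spec_set \<alpha>. y \<le> 4*(\<alpha>+1)*real N}" using \<open>y \<in> spec_set \<alpha>\<close> by simp
  qed
  have "card (g ` ({1..s}\<times>{1..s})) = s * s" using inj by (simp add: card_image)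
  moreover have "card (g ` ({1..s}\<times>{1..s})) \<le> card {y\<in>spec_set \<alpha>. y \<le> 4*(\<alpha>+1)*real N}"
    using sub spec_fin[OF assms(1)] by (rule card_mono[rotated])
  moreover have "N \<le> s * s" using sN by (simp add: power2_eq_square flip: of_nat_mult)
  ultimately show ?thesis by linarith
qed

lemma lam_bound:
  assumes "\<alpha> > 0" "\<alpha> \<notin> \<rat>" "N \<ge> 1"
  shows "lam \<alpha> N \<le> 4*(\<alpha>+1)*real N"
  using lam_le[OF assms(1,3) spec_count[OF assms]] .

lemma gap_bound:
  fixes f :: "real \<Rightarrow> real"
  assumes "\<alpha> > 0" "x \<in> spec_set \<alpha>" "x' \<in> spec_set \<alpha>" "x < x'" "x' \<le> B"
    and dio: "\<And>p q::int. q \<ge> 1 \<Longrightarrow> \<bar>of_int q*\<alpha> - of_int p\<bar> \<ge> f (of_int q)"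
    and anti: "\<And>q y. 1 \<le> q \<Longrightarrow> q \<le> y \<Longrightarrow> f y \<le> f q"
  shows "x' - x \<ge> min 1 (f (B/\<alpha>))"
proof -
  obtain m n where x: "x = \<alpha>*(real m)^2 + (real n)^2" using assms(2) unfolding spec_set_def by auto
  obtain m' n' where x': "x' = \<alpha>*(real m')^2 + (real n')^2" using assms(3) unfolding spec_set_def by auto
  define a where "a = int m'^2 - int m^2"
  define b where "b = int n'^2 - int n^2"
  have d: "x' - x = of_int a * \<alpha> + of_int b" unfolding a_def b_def x x' by (simp add: algebra_simps)
  have xm: "\<alpha> * (real m)^2 \<le> B" using x assms(4,5) zero_le_power2[of "real n"] by linarith
  have xm': "\<alpha> * (real m')^2 \<le> B" using x' assms(5) zero_le_power2[of "real n'"] by linarith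
  consider "a = 0" | "a > 0" | "a < 0" by linarith
  thus ?thesis
  proof cases
    case 1
    hence "of_int b > (0::real)" using d assms(4) by simp
    hence "b \<ge> 1" by simp
    hence "x' - x \<ge> 1" using d 1 by simp
    thus ?thesis by simp
  next
    case 2
    have "of_int a \<le> (real m')^2" unfolding a_def by simp
    also have "\<dots> \<le> B/\<alpha>" using xm' assms(1) by (simp add: field_simps)
    finally have aB: "of_int a \<le> B/\<alpha>" .
    have "x' - x = \<bar>of_int a * \<alpha> - of_int (-b)\<bar>" using d assms(4) by simp
    also have "\<dots> \<ge> f (of_int a)" using dio[of a "-b"] 2 by simp
    finally have "x' - x \<ge> f (of_int a)" .
    moreover have "f (B/\<alpha>) \<le> f (of_int a)" using anti aB 2 by simp
    ultimately show ?thesis by linarith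
  next
    case 3
    have "of_int (-a) \<le> (real m)^2" unfolding a_def by simp
    also have "\<dots> \<le> B/\<alpha>" using xm assms(1) by (simp add: field_simps)
    finally have aB: "of_int (-a) \<le> B/\<alpha>" .
    have "x' - x = \<bar>of_int (-a) * \<alpha> - of_int b\<bar>" using d assms(4) by simp
    also have "\<dots> \<ge> f (of_int (-a))" using dio[of "-a" b] 3 by simp
    finally have "x' - x \<ge> f (of_int (-a))" .
    moreover have "f (B/\<alpha>) \<le> f (of_int (-a))" using anti aB 3 by simp
    ultimately show ?thesis by linarith
  qed
qed

lemma delta_bound:
  fixes f :: "real \<Rightarrow> real"
  assumes "\<alpha> > 0" "\<alpha> \<notin> \<rat>" "N \<ge> 2"
    and dio: "\<And>p q::int. q \<ge> 1 \<Longrightarrow> \<bar>of_int q*\<alpha> - of_int p\<bar> \<ge> f (of_int q)"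
    and anti: "\<And>q y. 1 \<le> q \<Longrightarrow> q \<le> y \<Longrightarrow> f y \<le> f q"
  shows "delta_min \<alpha> N \<ge> min 1 (f (4*(\<alpha>+1)*real N/\<alpha>))"
proof -
  let ?D = "{lam \<alpha> (i + 1) - lam \<alpha> i | i. 1 \<le> i \<and> i < N}"
  have fin: "finite ?D"
  proof -
    have "?D = (\<lambda>i. lam \<alpha> (i + 1) - lam \<alpha> i) ` {1..<N}" by auto
    thus ?thesis by simp
  qed
  have ne: "?D \<noteq> {}" using assms(3) by auto
  have "\<forall>d\<in>?D. d \<ge> min 1 (f (4*(\<alpha>+1)*real N/\<alpha>))"
  proof
    fix d assume "d \<in> ?D"
    then obtain i where i: "d = lam \<alpha> (i + 1) - lam \<alpha> i" "1 \<le> i" "i < N" by auto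
    show "d \<ge> min 1 (f (4*(\<alpha>+1)*real N/\<alpha>))"
      unfolding i(1)
    proof (rule gap_bound[OF assms(1) _ _ _ _ dio anti])
      show "lam \<alpha> i \<in> spec_set \<alpha>" "lam \<alpha> (i+1) \<in> spec_set \<alpha>" using lam_props[OF assms(1)] by auto
      show "lam \<alpha> i < lam \<alpha> (i+1)" using lam_mono[OF assms(1) i(2)] by simp
      have "lam \<alpha> (i+1) \<le> lam \<alpha> N" using lam_le_lam[OF assms(1), of "i+1" N] i by simp
      also have "\<dots> \<le> 4*(\<alpha>+1)*real N" using lam_bound[OF assms(1,2)] assms(3) by simp
      finally show "lam \<alpha> (i+1) \<le> 4*(\<alpha>+1)*real N" .
    qed auto
  qed
  thus ?thesis unfolding delta_min_def using Min_ge_iff[OF fin ne] by blast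
qed



lemma part1:
  assumes "\<alpha> > 0" "\<alpha> \<notin> \<rat>" "badly_approximable \<alpha>"
  shows "\<exists>C>0. \<forall>N::nat. N \<ge> 2 \<longrightarrow> delta_min \<alpha> N \<ge> C / real N"
proof -
  obtain c where c: "c > 0" "\<And>p q :: int. q \<ge> 1 \<Longrightarrow> \<bar>real_of_int q * \<alpha> - real_of_int p\<bar> \<ge> c / real_of_int q"
    using assms(3) unfolding badly_approximable_def by blast
  define C where "C = min 1 (c*\<alpha>/(4*(\<alpha>+1)))"
  have C0: "C > 0" using c assms(1) by (simp add: C_def)
  have "delta_min \<alpha> N \<ge> C / real N" if N: "N \<ge> 2" for N
  proof -
    have "delta_min \<alpha> N \<ge> min 1 ((\<lambda>x. c/x) (4*(\<alpha>+1)*real N/\<alpha>))"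
    proof (rule delta_bound[OF assms(1,2) N])
      show "\<And>p q::int. q \<ge> 1 \<Longrightarrow> \<bar>of_int q*\<alpha> - of_int p\<bar> \<ge> (\<lambda>x. c/x) (of_int q)" using c by simp
      show "\<And>q y. 1 \<le> q \<Longrightarrow> q \<le> y \<Longrightarrow> (\<lambda>x. c/x) y \<le> (\<lambda>x. c/x) q"
        using c(1) by (simp add: divide_left_mono)
    qed
    moreover have "C / real N \<le> 1" using N C_def by (simp add: divide_le_eq)
    moreover have "C / real N \<le> c / (4*(\<alpha>+1)*real N/\<alpha>)"
    proof -
      have "c / (4*(\<alpha>+1)*real N/\<alpha>) = (c*\<alpha>/(4*(\<alpha>+1))) / real N" using assms(1) by (simp add: field_simps)
      moreover have "C / real N \<le> (c*\<alpha>/(4*(\<alpha>+1))) / real N" unfolding C_def by (intro divide_right_mono) auto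
      ultimately show ?thesis by simp
    qed
    ultimately show ?thesis by simp
  qed
  thus ?thesis using C0 by blast
qed

lemma part2:
  assumes "\<alpha> > 0" "\<alpha> \<notin> \<rat>" "strongly_diophantine \<alpha>" "\<epsilon> > 0"
  shows "\<exists>C>0. \<forall>N::nat. N \<ge> 2 \<longrightarrow> delta_min \<alpha> N \<ge> C / real N powr (1 + \<epsilon>)"
proof -
  obtain c where c: "c > 0" "\<And>p q :: int. q \<ge> 1 \<Longrightarrow> \<bar>real_of_int q * \<alpha> - real_of_int p\<bar> \<ge> c * (real_of_int q) powr (-1 - \<epsilon>)"
    using assms(3,4) unfolding strongly_diophantine_def by blast
  define K where "K = 4*(\<alpha>+1)/\<alpha>"
  have K0: "K > 0" using assms(1) by (simp add: K_def)
  define C where "C = min 1 (c * K powr (-1-\<epsilon>))"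
  have C0: "C > 0" using c K0 by (simp add: C_def)
  have "delta_min \<alpha> N \<ge> C / real N powr (1 + \<epsilon>)" if N: "N \<ge> 2" for N
  proof -
    have "delta_min \<alpha> N \<ge> min 1 ((\<lambda>x. c * x powr (-1-\<epsilon>)) (4*(\<alpha>+1)*real N/\<alpha>))"
    proof (rule delta_bound[OF assms(1,2) N])
      show "\<And>p q::int. q \<ge> 1 \<Longrightarrow> \<bar>of_int q*\<alpha> - of_int p\<bar> \<ge> (\<lambda>x. c * x powr (-1-\<epsilon>)) (of_int q)" using c by simp
      show "\<And>q y. 1 \<le> q \<Longrightarrow> q \<le> y \<Longrightarrow> (\<lambda>x. c * x powr (-1-\<epsilon>)) y \<le> (\<lambda>x. c * x powr (-1-\<epsilon>)) q"
        using c(1) assms(4) by (auto intro!: mult_left_mono powr_mono2')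
    qed
    moreover have "4*(\<alpha>+1)*real N/\<alpha> = K * real N" unfolding K_def by simp
    moreover have "(K * real N) powr (-1-\<epsilon>) = K powr (-1-\<epsilon>) / real N powr (1+\<epsilon>)"
    proof -
      have "real N powr (-1-\<epsilon>) = inverse (real N powr (1+\<epsilon>))" using powr_minus[of "real N" "1+\<epsilon>"] by simp
      thus ?thesis using K0 N by (simp add: powr_mult divide_inverse)
    qed
    moreover have Np: "real N powr (1+\<epsilon>) \<ge> 1" using N assms(4) by (intro ge_one_powr_ge_zero) auto
    moreover have "C / real N powr (1 + \<epsilon>) \<le> 1"
    proof -
      have "C \<le> 1" unfolding C_def by simp
      hence "C \<le> real N powr (1 + \<epsilon>)" using Np by linarith
      moreover have "real N powr (1 + \<epsilon>) > 0" using Np by linarith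
      ultimately show ?thesis by (simp add: divide_le_eq)
    qed
    moreover have "C / real N powr (1 + \<epsilon>) \<le> c * (K powr (-1-\<epsilon>) / real N powr (1+\<epsilon>))"
    proof -
      have "C / real N powr (1 + \<epsilon>) \<le> (c * K powr (-1-\<epsilon>)) / real N powr (1 + \<epsilon>)"
        unfolding C_def using Np by (intro divide_right_mono) auto
      thus ?thesis by simp
    qed
    ultimately show ?thesis by simp
  qed
  thus ?thesis using C0 by blast
qed

lemma part3_det:
  assumes "\<alpha> > 0" "\<alpha> \<notin> \<rat>" "\<epsilon> > 0" "c > 0"
    and c: "\<And>p q :: int. q \<ge> 1 \<Longrightarrow> \<bar>real_of_int q * \<alpha> - real_of_int p\<bar> \<ge> c / (real_of_int q * ln (real_of_int q + 2) powr (1+\<epsilon>))"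
  shows "\<exists>C>0. \<forall>N::nat. N \<ge> 2 \<longrightarrow> delta_min \<alpha> N \<ge> C / (real N * ln (real N) powr (1 + \<epsilon>))"
proof -
  define h where "h = (\<lambda>x::real. x * ln (x + 2) powr (1+\<epsilon>))"
  define K where "K = 4*(\<alpha>+1)/\<alpha>"
  have K0: "K > 0" using assms(1) by (simp add: K_def)
  define L where "L = ln (K+2) / ln 2 + 1"
  have L1: "L \<ge> 1" using K0 by (simp add: L_def)
  define C where "C = min (ln 2 powr (1+\<epsilon>)) (c / (K * L powr (1+\<epsilon>)))"
  have C0: "C > 0" using assms(4) K0 L1 by (simp add: C_def)
  have hmono: "h q \<le> h y" if "1 \<le> q" "q \<le> y" for q y
    unfolding h_def using that assms(3) by (auto intro!: mult_mono powr_mono2)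
  have hpos: "h q > 0" if "1 \<le> q" for q
    unfolding h_def using that by simp
  have "delta_min \<alpha> N \<ge> C / (real N * ln (real N) powr (1 + \<epsilon>))" if N: "N \<ge> 2" for N
  proof -
    have "delta_min \<alpha> N \<ge> min 1 ((\<lambda>x. c / h x) (4*(\<alpha>+1)*real N/\<alpha>))"
    proof (rule delta_bound[OF assms(1,2) N])
      show "\<And>p q::int. q \<ge> 1 \<Longrightarrow> \<bar>of_int q*\<alpha> - of_int p\<bar> \<ge> (\<lambda>x. c / h x) (of_int q)" using c by (simp add: h_def)
      show "\<And>q y. 1 \<le> q \<Longrightarrow> q \<le> y \<Longrightarrow> (\<lambda>x. c / h x) y \<le> (\<lambda>x. c / h x) q"
        using assms(4) hmono hpos by (simp add: divide_left_mono)
    qed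
    moreover have "4*(\<alpha>+1)*real N/\<alpha> = K * real N" unfolding K_def by simp
    moreover have lnN: "ln (real N) \<ge> ln 2" using N by simp
    moreover have hb: "h (K * real N) \<le> K * L powr (1+\<epsilon>) * (real N * ln (real N) powr (1 + \<epsilon>))"
    proof -
      have KN: "K * real N > 0" using K0 N by simp
      have KN2: "(K+2) * real N > 0" using K0 N by simp
      have le: "K*real N + 2 \<le> (K+2)*real N" using N by (simp add: algebra_simps)
      have "ln (K * real N + 2) \<le> ln ((K+2) * real N)"
        using KN KN2 le by (subst ln_le_cancel_iff) linarith+
      also have "\<dots> = ln (K+2) + ln (real N)" using K0 N by (simp add: ln_mult)
      also have "\<dots> \<le> L * ln (real N)"
      proof -
        have "ln (K+2) = (ln (K+2) / ln 2) * ln 2" by simp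
        also have "\<dots> \<le> (ln (K+2) / ln 2) * ln (real N)"
          using lnN K0 by (intro mult_left_mono) auto
        finally show ?thesis unfolding L_def by (simp add: algebra_simps)
      qed
      finally have a: "ln (K * real N + 2) \<le> L * ln (real N)" .
      have "ln (K * real N + 2) powr (1+\<epsilon>) \<le> (L * ln (real N)) powr (1+\<epsilon>)"
        using a K0 N assms(3) by (intro powr_mono2) auto
      also have "\<dots> = L powr (1+\<epsilon>) * ln (real N) powr (1+\<epsilon>)"
        using L1 N by (simp add: powr_mult)
      finally have "h (K * real N) \<le> (K * real N) * (L powr (1+\<epsilon>) * ln (real N) powr (1+\<epsilon>))"
        unfolding h_def using K0 by (intro mult_left_mono) auto
      thus ?thesis by (simp add: algebra_simps)
    qed
    moreover have D1: "real N * ln (real N) powr (1 + \<epsilon>) \<ge> ln 2 powr (1+\<epsilon>)"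
    proof -
      have "ln 2 powr (1+\<epsilon>) \<le> ln (real N) powr (1+\<epsilon>)" using lnN assms(3) by (intro powr_mono2) auto
      also have "\<dots> \<le> real N * ln (real N) powr (1 + \<epsilon>)" using mult_right_mono[of 1 "real N" "ln (real N) powr (1+\<epsilon>)"] N by simp
      finally show ?thesis .
    qed
    moreover have "C / (real N * ln (real N) powr (1 + \<epsilon>)) \<le> 1"
    proof -
      have "C \<le> real N * ln (real N) powr (1 + \<epsilon>)" using D1 C_def by linarith
      moreover have "ln 2 powr (1 + \<epsilon>) > 0" by simp
      hence "real N * ln (real N) powr (1 + \<epsilon>) > 0" using D1 by linarith
      ultimately show ?thesis by (simp add: divide_le_eq)
    qed
    moreover have "C / (real N * ln (real N) powr (1 + \<epsilon>)) \<le> c / h (K * real N)"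
    proof -
      define D where "D = real N * ln (real N) powr (1 + \<epsilon>)"
      have "ln 2 powr (1 + \<epsilon>) > 0" by simp
      hence D0: "D > 0" using D1 unfolding D_def by linarith
      have KN: "K * real N > 0" using K0 N by simp
      hence "ln (K * real N + 2) > 0" by (intro ln_gt_zero) linarith
      hence "ln (K * real N + 2) powr (1+\<epsilon>) > 0" by simp
      hence hK: "h (K * real N) > 0" unfolding h_def using KN by simp
      have "C / D \<le> (c / (K * L powr (1+\<epsilon>))) / D" unfolding C_def using D0 by (intro divide_right_mono) auto
      also have "\<dots> = c / (K * L powr (1+\<epsilon>) * D)" by simp
      also have "\<dots> \<le> c / h (K * real N)" using hb hK assms(4) unfolding D_def
        by (intro divide_left_mono) auto
      finally show ?thesis unfolding D_def .
    qed
    ultimately show ?thesis by simp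
  qed
  thus ?thesis using C0 by blast
qed



lemma ln_ge1: "x \<ge> (1::real) \<Longrightarrow> ln (x + 2) \<ge> 1"
proof -
  assume "x \<ge> 1"
  hence "exp 1 \<le> x + 2" using exp_le by linarith
  hence "ln (exp 1) \<le> ln (x + 2)" using \<open>x \<ge> 1\<close> by (subst ln_le_cancel_iff) auto
  thus ?thesis by simp
qed

lemma summable_bertrand:
  assumes e: "e > (1::real)"
  shows "summable (\<lambda>n. 1 / (real (Suc n) * ln (real (Suc n) + 2) powr e))"
proof -
  define f where "f = (\<lambda>m::nat. 1 / (real m * ln (real m + 2) powr e))"
  have fmono: "f (Suc m) \<le> f m" if "0 < m" for m
  proof -
    have l1: "ln (real m + 2) > 0" by (intro ln_gt_zero) simp
    have "ln (real m + 2) \<le> ln (real (Suc m) + 2)" by simp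
    hence "ln (real m + 2) powr e \<le> ln (real (Suc m) + 2) powr e"
      using l1 e by (intro powr_mono2) auto
    hence "real m * ln (real m + 2) powr e \<le> real (Suc m) * ln (real (Suc m) + 2) powr e"
      by (intro mult_mono) auto
    moreover have "real m * ln (real m + 2) powr e > 0" using that l1 by simp
    ultimately show ?thesis unfolding f_def by (intro divide_left_mono) auto
  qed
  have fnn: "f n \<ge> 0" for n unfolding f_def by simp
  have "summable (\<lambda>n. 2^n * f (2^n))"
  proof (rule summable_comparison_test_ev)
    show "summable (\<lambda>n. inverse (ln 2 powr e) * real n powr (-e))"
      using e by (intro summable_mult) (simp add: summable_real_powr_iff)
    show "\<forall>\<^sub>F n in sequentially. norm (2^n * f (2^n)) \<le> inverse (ln 2 powr e) * real n powr (-e)"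
    proof (rule eventually_mono[OF eventually_gt_at_top[of "0::nat"]])
      fix n :: nat assume n: "0 < n"
      have l2: "ln 2 > (0::real)" by simp
      have eq: "2^n * f (2^n) = 1 / ln (2^n + 2) powr e" unfolding f_def by simp
      have "real n * ln 2 = ln (2^n)" by (simp add: ln_realpow)
      also have "\<dots> \<le> ln (2^n + 2)"
      proof -
        have p2: "(2::real)^n > 0" by simp
        show ?thesis using p2 by (subst ln_le_cancel_iff) linarith+
      qed
      finally have a: "real n * ln 2 \<le> ln (2^n + 2)" .
      have pos: "real n * ln 2 > 0" using n l2 by simp
      have X1: "(real n * ln 2) powr e \<le> ln (2^n + 2) powr e" using a pos e by (intro powr_mono2) auto
      have X2: "(real n * ln 2) powr e = real n powr e * ln 2 powr e" using l2 by (simp add: powr_mult)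
      have X3: "real n powr e * ln 2 powr e > 0" using n l2 by simp
      have X4: "ln (2^n + 2) powr e > 0" using X1 X2 X3 by linarith
      have "1 / ln (2^n + 2) powr e \<le> 1 / (real n powr e * ln 2 powr e)"
        using X1 X2 X3 X4 by (intro divide_left_mono) auto
      also have "\<dots> = inverse (ln 2 powr e) * real n powr (-e)"
        by (simp add: powr_minus field_simps)
      finally show "norm (2^n * f (2^n)) \<le> inverse (ln 2 powr e) * real n powr (-e)"
        using eq fnn by simp
    qed
  qed
  hence "summable f" using condensation_test[of f] fmono fnn by blast
  hence "summable (\<lambda>n. f (Suc n))" by (subst summable_Suc_iff)
  thus ?thesis unfolding f_def .
qed



definition rr :: "nat \<Rightarrow> nat \<Rightarrow> real" where
  "rr k q = 1 / (real q * ln (real q + 2) powr (1 + 1 / real (Suc k)))"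

definition II :: "nat \<Rightarrow> nat \<Rightarrow> int \<Rightarrow> real set" where
  "II k q p = {(of_int p - rr k q) / real q <..< (of_int p + rr k q) / real q}"

definition AA :: "nat \<Rightarrow> nat \<Rightarrow> nat \<Rightarrow> real set" where
  "AA k M n = {-real M..real M} \<inter> (\<Union>p. II k (Suc n) p)"

lemma rr_pos: "q \<ge> 1 \<Longrightarrow> rr k q > 0"
  unfolding rr_def by (auto intro!: mult_pos_pos ln_gt_zero)

lemma rr_le1: "q \<ge> 1 \<Longrightarrow> rr k q \<le> 1"
proof -
  assume q: "q \<ge> 1"
  have "ln (real q + 2) \<ge> 1" using ln_ge1[of "real q"] q by simp
  hence "ln (real q + 2) powr (1 + 1 / real (Suc k)) \<ge> 1" by (intro ge_one_powr_ge_zero) auto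
  moreover have "real q \<ge> 1" using q by simp
  ultimately have "real q * ln (real q + 2) powr (1 + 1 / real (Suc k)) \<ge> 1"
    by (metis mult_mono' mult_1 zero_le_one)
  thus ?thesis unfolding rr_def by simp
qed

lemma II_iff: "q \<ge> 1 \<Longrightarrow> x \<in> II k q p \<longleftrightarrow> \<bar>real q * x - of_int p\<bar> < rr k q"
proof -
  assume q: "q \<ge> 1"
  hence q0: "real q > 0" by simp
  show ?thesis unfolding II_def using q0 by (auto simp: field_simps abs_less_iff)
qed

lemma AA_sets: "AA k M n \<in> sets lborel"
  unfolding AA_def II_def by auto

lemma AA_fin: "emeasure lborel (AA k M n) < \<infinity>"
proof -
  have "emeasure lborel (AA k M n) \<le> emeasure lborel {-real M..real M}"
    by (rule emeasure_mono) (auto simp: AA_def)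
  also have "\<dots> < \<infinity>" by simp
  finally show ?thesis .
qed

lemma AA_measure: "measure lborel (AA k M n) \<le> 2 * (2 * real M + 3) * rr k (Suc n)"
proof -
  define q where "q = Suc n"
  have q1: "q \<ge> 1" and q0: "real q > 0" by (simp_all add: q_def)
  define r where "r = rr k q"
  have r0: "r > 0" and r1: "r \<le> 1" using rr_pos[OF q1] rr_le1[OF q1] by (simp_all add: r_def)
  define B where "B = int q * int M + 1"
  define P where "P = {-B..B}"
  have sub: "AA k M n \<subseteq> (\<Union>p\<in>P. II k q p)"
  proof
    fix x assume "x \<in> AA k M n"
    then obtain p where x: "-real M \<le> x" "x \<le> real M" "x \<in> II k q p" unfolding AA_def q_def by auto
    hence a: "\<bar>real q * x - of_int p\<bar> < r" using II_iff[OF q1] r_def by simp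
    have "\<bar>real q * x\<bar> \<le> real q * real M" using x q0 by (simp add: abs_mult abs_le_iff)
    hence "\<bar>of_int p\<bar> < real q * real M + 1" using a r1 by linarith
    hence "real_of_int \<bar>p\<bar> < real_of_int B" unfolding B_def by simp
    hence "\<bar>p\<bar> < B" by (simp only: of_int_less_iff)
    hence "p \<in> P" unfolding P_def by auto
    thus "x \<in> (\<Union>p\<in>P. II k q p)" using x by auto
  qed
  have fP: "finite P" unfolding P_def by simp
  have Ifm: "II k q p \<in> fmeasurable lborel" for p
  proof -
    have "(of_int p - r) / real q \<le> (of_int p + r) / real q" using r0 q0 by (intro divide_right_mono) auto
    thus ?thesis unfolding II_def r_def[symmetric] by (intro fmeasurableI) auto
  qed
  have "measure lborel (AA k M n) \<le> measure lborel (\<Union>p\<in>P. II k q p)"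
    using sub AA_sets Ifm fP by (intro measure_mono_fmeasurable) auto
  also have "\<dots> \<le> (\<Sum>p\<in>P. measure lborel (II k q p))"
    using fP by (intro measure_UNION_le) (auto simp: II_def)
  also have "\<dots> = (\<Sum>p\<in>P. 2 * r / real q)"
  proof (rule sum.cong)
    fix p assume "p \<in> P"
    have "(of_int p - r) / real q \<le> (of_int p + r) / real q" using r0 q0 by (intro divide_right_mono) auto
    thus "measure lborel (II k q p) = 2 * r / real q" unfolding II_def r_def[symmetric]
      using q0 by (simp add: field_simps)
  qed simp
  also have "\<dots> = real (card P) * (2 * r / real q)" by simp
  also have "card P = nat (2 * B + 1)" unfolding P_def by simp
  also have "real (nat (2 * B + 1)) = 2 * real q * real M + 3" unfolding B_def by simp
  also have "(2 * real q * real M + 3) * (2 * r / real q) \<le> 2 * (2 * real M + 3) * r"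
  proof -
    have "(2 * real q * real M + 3) * (2 * r / real q) = (2 * real M + 3 / real q) * (2 * r)"
      using q0 by (simp add: field_simps)
    also have "\<dots> \<le> (2 * real M + 3) * (2 * r)"
      using q1 r0 by (intro mult_right_mono) (auto simp: divide_le_eq)
    also have "\<dots> = 2 * (2 * real M + 3) * r" by (simp add: algebra_simps)
    finally show ?thesis .
  qed
  finally show ?thesis unfolding r_def q_def .
qed



lemma AE_ev: "AE \<alpha> in lborel. \<forall>k M. eventually (\<lambda>n. \<alpha> \<notin> AA k M n) sequentially"
proof -
  have "AE \<alpha> in lborel. eventually (\<lambda>n. \<alpha> \<in> space lborel - AA k M n) sequentially" for k M
  proof (rule borel_cantelli_AE1)
    show "AA k M n \<in> sets lborel" for n by (rule AA_sets)
    show "emeasure lborel (AA k M n) < \<infinity>" for n by (rule AA_fin)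
    show "summable (\<lambda>n. measure lborel (AA k M n))"
    proof (rule summable_comparison_test)
      show "\<exists>N. \<forall>n\<ge>N. norm (measure lborel (AA k M n)) \<le> 2 * (2 * real M + 3) * rr k (Suc n)"
        using AA_measure by auto
      have "summable (\<lambda>n. 1 / (real (Suc n) * ln (real (Suc n) + 2) powr (1 + 1 / real (Suc k))))"
        by (rule summable_bertrand) simp
      hence "summable (\<lambda>n. rr k (Suc n))" unfolding rr_def .
      thus "summable (\<lambda>n. 2 * (2 * real M + 3) * rr k (Suc n))" by (rule summable_mult)
    qed
  qed
  hence "AE \<alpha> in lborel. eventually (\<lambda>n. \<alpha> \<notin> AA k M n) sequentially" for k M by simp
  thus ?thesis unfolding AE_all_countable by blast
qed

definition nd :: "real \<Rightarrow> real" where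
  "nd x = min (x - of_int \<lfloor>x\<rfloor>) (of_int \<lceil>x\<rceil> - x)"

lemma nd_props:
  assumes "x \<notin> \<int>"
  shows "nd x > 0" "\<bar>x - of_int p\<bar> \<ge> nd x"
proof -
  have a: "x \<noteq> of_int \<lfloor>x\<rfloor>" "x \<noteq> of_int \<lceil>x\<rceil>" using assms Ints_of_int by metis+
  have "of_int \<lfloor>x\<rfloor> \<le> x" "x \<le> of_int \<lceil>x\<rceil>" by simp_all
  note b = this
  have c: "of_int \<lfloor>x\<rfloor> < x" using a(1) b(1) by linarith
  have d: "x < of_int \<lceil>x\<rceil>" using a(2) b(2) by linarith
  show "nd x > 0" unfolding nd_def using c d by simp
  show "\<bar>x - of_int p\<bar> \<ge> nd x"
  proof (cases "p \<le> \<lfloor>x\<rfloor>")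
    case True
    hence "real_of_int p \<le> of_int \<lfloor>x\<rfloor>" by simp
    thus ?thesis unfolding nd_def using \<open>of_int \<lfloor>x\<rfloor> \<le> x\<close> by linarith
  next
    case False
    hence "\<lfloor>x\<rfloor> + 1 \<le> p" by linarith
    hence "real_of_int \<lfloor>x\<rfloor> + 1 \<le> real_of_int p" by linarith
    moreover have "x < real_of_int \<lfloor>x\<rfloor> + 1" by linarith
    ultimately have "x \<le> real_of_int p" by linarith
    hence "\<lceil>x\<rceil> \<le> p" by (simp add: ceiling_le_iff)
    hence "of_int \<lceil>x\<rceil> \<le> real_of_int p" by simp
    thus ?thesis unfolding nd_def using \<open>x \<le> of_int \<lceil>x\<rceil>\<close> by linarith
  qed
qed

lemma irr_mult: "\<alpha> \<notin> \<rat> \<Longrightarrow> q \<ge> (1::nat) \<Longrightarrow> real q * \<alpha> \<notin> \<int>"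
proof
  assume "\<alpha> \<notin> \<rat>" "q \<ge> 1" "real q * \<alpha> \<in> \<int>"
  then obtain m where m: "real q * \<alpha> = of_int m" by (auto elim: Ints_cases)
  hence "\<alpha> = of_int m / real q" using \<open>q \<ge> 1\<close> by (simp add: field_simps)
  also have "\<dots> \<in> \<rat>" by (intro Rats_divide) simp_all
  finally show False using \<open>\<alpha> \<notin> \<rat>\<close> by simp
qed

lemma det_bound:
  assumes irr: "\<alpha> \<notin> \<rat>" and ev: "\<forall>k M. eventually (\<lambda>n. \<alpha> \<notin> AA k M n) sequentially" and e: "\<epsilon> > 0"
  shows "\<exists>c>0. \<forall>p q::int. q \<ge> 1 \<longrightarrow>
     c / (real_of_int q * ln (real_of_int q + 2) powr (1+\<epsilon>)) \<le> \<bar>real_of_int q * \<alpha> - real_of_int p\<bar>"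
proof -
  obtain m :: nat where m: "m > 0" "inverse (real m) < \<epsilon>" using ex_inverse_of_nat_less[OF e] by blast
  define k where "k = m - 1"
  have ke: "1 / real (Suc k) \<le> \<epsilon>" using m unfolding k_def by (simp add: inverse_eq_divide)
  define M where "M = nat \<lceil>\<bar>\<alpha>\<bar>\<rceil>"
  have aM: "-real M \<le> \<alpha>" "\<alpha> \<le> real M" using real_nat_ceiling_ge[of "\<bar>\<alpha>\<bar>"] unfolding M_def by linarith+
  obtain N0 where N0: "\<And>n. n \<ge> N0 \<Longrightarrow> \<alpha> \<notin> AA k M n"
    using ev unfolding eventually_sequentially by blast
  define D where "D = (\<lambda>q::nat. nd (real q * \<alpha>)) ` {1..Suc N0}"
  have fD: "finite D" and neD: "D \<noteq> {}" unfolding D_def by auto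
  define \<delta> where "\<delta> = Min D"
  have \<delta>0: "\<delta> > 0" unfolding \<delta>_def using fD neD
    by (subst Min_gr_iff) (auto simp: D_def intro!: nd_props(1) irr_mult[OF irr])
  define c where "c = min 1 \<delta>"
  have c0: "c > 0" using \<delta>0 by (simp add: c_def)
  have "c / (real_of_int q * ln (real_of_int q + 2) powr (1+\<epsilon>)) \<le> \<bar>real_of_int q * \<alpha> - real_of_int p\<bar>"
    if q: "q \<ge> 1" for p q :: int
  proof -
    define Q where "Q = nat q"
    have Q: "real Q = real_of_int q" "Q \<ge> 1" using q by (simp_all add: Q_def)
    define H where "H = real Q * ln (real Q + 2) powr (1+\<epsilon>)"
    have lnQ: "ln (real Q + 2) \<ge> 1" using ln_ge1[of "real Q"] Q by simp
    have H1: "H \<ge> 1"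
    proof -
      have "ln (real Q + 2) powr (1+\<epsilon>) \<ge> 1" using lnQ e by (intro ge_one_powr_ge_zero) auto
      moreover have "real Q \<ge> 1" using Q by simp
      ultimately show ?thesis unfolding H_def by (metis mult_mono' mult_1 zero_le_one)
    qed
    have cH: "c / H \<le> c" using H1 c0 by (simp add: divide_le_eq mult_le_cancel_left1)
    have "c / H \<le> \<bar>real Q * \<alpha> - real_of_int p\<bar>"
    proof (cases "Q \<le> Suc N0")
      case True
      hence "nd (real Q * \<alpha>) \<in> D" using Q(2) unfolding D_def by (intro imageI) auto
      hence "\<delta> \<le> nd (real Q * \<alpha>)" unfolding \<delta>_def using fD by simp
      also have "\<dots> \<le> \<bar>real Q * \<alpha> - real_of_int p\<bar>" by (rule nd_props(2)[OF irr_mult[OF irr Q(2)]])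
      finally show ?thesis using cH unfolding c_def by linarith
    next
      case False
      define n where "n = Q - 1"
      have Sn: "Suc n = Q" using Q unfolding n_def by simp
      have "n \<ge> N0" using False unfolding n_def by simp
      hence "\<alpha> \<notin> AA k M n" by (rule N0)
      hence "\<alpha> \<notin> II k Q p" using aM unfolding AA_def Sn by auto
      hence r: "rr k Q \<le> \<bar>real Q * \<alpha> - real_of_int p\<bar>" using II_iff[OF Q(2)] by simp
      have "ln (real Q + 2) powr (1 + 1 / real (Suc k)) \<le> ln (real Q + 2) powr (1+\<epsilon>)"
        using lnQ ke by (intro powr_mono) auto
      moreover have "ln (real Q + 2) powr (1 + 1 / real (Suc k)) > 0" using lnQ by simp
      ultimately have "real Q * ln (real Q + 2) powr (1 + 1 / real (Suc k)) \<le> H"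
        "real Q * ln (real Q + 2) powr (1 + 1 / real (Suc k)) > 0"
        unfolding H_def using Q by (auto intro!: mult_left_mono)
      hence "1 / H \<le> rr k Q" unfolding rr_def by (intro divide_left_mono) auto
      moreover have "c / H \<le> 1 / H" using H1 unfolding c_def by (intro divide_right_mono) auto
      ultimately show ?thesis using r by linarith
    qed
    thus ?thesis using Q unfolding H_def by simp
  qed
  thus ?thesis using c0 by blast
qed


theorem proposition2p1:
  shows "(\<forall>\<alpha>::real. \<alpha> > 0 \<and> \<alpha> \<notin> \<rat> \<and> badly_approximable \<alpha> \<longrightarrow>
            (\<exists>C>0. \<forall>N::nat. N \<ge> 2 \<longrightarrow> delta_min \<alpha> N \<ge> C / real N))
       \<and> (\<forall>\<alpha>::real. \<alpha> > 0 \<and> \<alpha> \<notin> \<rat> \<and> strongly_diophantine \<alpha> \<longrightarrow>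
            (\<forall>\<epsilon>>0. \<exists>C>0. \<forall>N::nat. N \<ge> 2 \<longrightarrow>
                delta_min \<alpha> N \<ge> C / real N powr (1 + \<epsilon>)))
       \<and> (AE \<alpha> in lborel. \<alpha> > 0 \<and> \<alpha> \<notin> \<rat> \<longrightarrow>
            (\<forall>\<epsilon>>0. \<exists>C>0. \<forall>N::nat. N \<ge> 2 \<longrightarrow>
                delta_min \<alpha> N \<ge> C / (real N * ln (real N) powr (1 + \<epsilon>))))"
proof (intro conjI)
  show "\<forall>\<alpha>::real. \<alpha> > 0 \<and> \<alpha> \<notin> \<rat> \<and> badly_approximable \<alpha> \<longrightarrow>
            (\<exists>C>0. \<forall>N::nat. N \<ge> 2 \<longrightarrow> delta_min \<alpha> N \<ge> C / real N)"
    using part1 by blast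
  show "\<forall>\<alpha>::real. \<alpha> > 0 \<and> \<alpha> \<notin> \<rat> \<and> strongly_diophantine \<alpha> \<longrightarrow>
            (\<forall>\<epsilon>>0. \<exists>C>0. \<forall>N::nat. N \<ge> 2 \<longrightarrow>
                delta_min \<alpha> N \<ge> C / real N powr (1 + \<epsilon>))"
    using part2 by blast
  show "AE \<alpha> in lborel. \<alpha> > 0 \<and> \<alpha> \<notin> \<rat> \<longrightarrow>
            (\<forall>\<epsilon>>0. \<exists>C>0. \<forall>N::nat. N \<ge> 2 \<longrightarrow>
                delta_min \<alpha> N \<ge> C / (real N * ln (real N) powr (1 + \<epsilon>)))"
    using AE_ev
  proof (rule eventually_mono)
    fix \<alpha> :: real
    assume ev: "\<forall>k M. eventually (\<lambda>n. \<alpha> \<notin> AA k M n) sequentially"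
    show "\<alpha> > 0 \<and> \<alpha> \<notin> \<rat> \<longrightarrow>
            (\<forall>\<epsilon>>0. \<exists>C>0. \<forall>N::nat. N \<ge> 2 \<longrightarrow>
                delta_min \<alpha> N \<ge> C / (real N * ln (real N) powr (1 + \<epsilon>)))"
    proof (intro impI allI)
      fix \<epsilon> :: real
      assume a: "\<alpha> > 0 \<and> \<alpha> \<notin> \<rat>" and e: "\<epsilon> > 0"
      obtain c where c: "c > 0" "\<forall>p q::int. q \<ge> 1 \<longrightarrow>
          c / (real_of_int q * ln (real_of_int q + 2) powr (1+\<epsilon>)) \<le> \<bar>real_of_int q * \<alpha> - real_of_int p\<bar>"
        using det_bound[of \<alpha> \<epsilon>] a ev e by blast
      show "\<exists>C>0. \<forall>N::nat. N \<ge> 2 \<longrightarrow>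
                delta_min \<alpha> N \<ge> C / (real N * ln (real N) powr (1 + \<epsilon>))"
        using part3_det[of \<alpha> \<epsilon> c] a e c by blast
    qed
  qed
qed

end
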